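(* Let $\phi_1,\dots,\phi_n:\mathbb{R}^d\to\mathbb{R}$ be differentiable and let $P(w)=\frac1n\sum_{i=1}^n\phi_i(w)$. Suppose $P$ is $H$-strongly convex with $H>0$ and $(1/\gamma)$-smooth, and let $w^*$ be a minimizer of $P$. Run the stratified-sampling minibatch SGD algorithm described in the context with constant step size $\eta_t=\eta\in\big(0,\frac{2}{H+1/\gamma}\big]$. Let $\alpha(\eta)=1-\frac{2\eta H/\gamma}{H+1/\gamma}$. Then $\alpha(\eta)\in\big[\big(\frac{H-1/\gamma}{H+1/\gamma}\big)^2,1\big)$, and for every $T\ge1$, $$\mathbb{E}P(w_{T+1})-P(w^* )\le\frac{\alpha(\eta)^T}{2\gamma}\|w^*\|^2+\frac{\eta^2}{2\gamma}\sum_{t=1}^T\alpha(\eta)^{T-t}\,\mathbb{E}V_t,$$ where $V_t$ is the variance of the stochastic gradient $g_t$ defined in the context.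
   Context: $\|\cdot\|$ denotes the Euclidean norm. A differentiable $\phi:\mathbb{R}^d\to\mathbb{R}$ is $H$-strongly convex ($H\ge0$) if $\phi(u)\ge\phi(v)+\nabla\phi(v)^\top(u-v)+\frac H2\|u-v\|^2$ for all $u,v$, and $(1/\gamma)$-smooth ($\gamma>0$) if $\phi(u)\le\phi(v)+\nabla\phi(v)^\top(u-v)+\frac1{2\gamma}\|u-v\|^2$ for all $u,v$. Algorithm (SGD with stratified sampling): start with $w_1=0$. At each step $t=1,2,\dots$, a partition of $[n]=\{1,\dots,n\}$ into nonempty disjoint sets $C_1^t,\dots,C_k^t$ with $|C_i^t|=n_i^t$, and positive integers $b_1^t,\dots,b_k^t$, are chosen (possibly depending on the past, but before the step-$t$ sampling). Then, independently across $i$ and of the past given these choices, for each $i$ a multiset $B_i^t$ of $b_i^t$ indices is drawn i.i.d. uniformly (with replacement) from $C_i^t$. Set $g_t=\frac1n\sum_{i=1}^k\frac{n_i^t}{b_i^t}\sum_{s\in B_i^t}\nabla\phi_s(w_t)$ and $w_{t+1}=w_t-\eta_t g_t$. The variance is $V_t=\mathbb{E}\big[\|g_t-\nabla P(w_t)\|^2\,\big|\,\text{past}\big]$ (note $\mathbb{E}[g_t\mid\text{past}]=\nabla P(w_t)$). *)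

theory Defs
  imports "HOL-Probability.Probability"
begin

text \<open>Component functions are indexed by 0..n-1 (i.e. the set {..<n}) instead of 1..n.\<close>

definition avg :: "nat \<Rightarrow> (nat \<Rightarrow> 'b \<Rightarrow> 'c::real_vector) \<Rightarrow> 'b \<Rightarrow> 'c" where
  "avg n f w = (1 / real n) *\<^sub>R (\<Sum>i<n. f i w)"

definition strongly_convex_grad :: "real \<Rightarrow> ('a::real_inner \<Rightarrow> real) \<Rightarrow> ('a \<Rightarrow> 'a) \<Rightarrow> bool" where
  "strongly_convex_grad H f f' \<longleftrightarrow>
     (\<forall>u v. f u \<ge> f v + f' v \<bullet> (u - v) + H / 2 * (norm (u - v))\<^sup>2)"

definition smooth_grad :: "real \<Rightarrow> ('a::real_inner \<Rightarrow> real) \<Rightarrow> ('a \<Rightarrow> 'a) \<Rightarrow> bool" where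
  "smooth_grad \<gamma> f f' \<longleftrightarrow>
     (\<forall>u v. f u \<le> f v + f' v \<bullet> (u - v) + 1 / (2 * \<gamma>) * (norm (u - v))\<^sup>2)"

text \<open>A choice at a step: a list of clusters C_1..C_k and batch sizes b_1..b_k.\<close>
type_synonym choice = "nat set list \<times> nat list"

definition valid_choice :: "nat \<Rightarrow> choice \<Rightarrow> bool" where
  "valid_choice n c \<longleftrightarrow>
     (let Cs = fst c; bs = snd c in
        length Cs = length bs \<and> length Cs \<ge> 1 \<and>
        (\<forall>i<length Cs. Cs ! i \<noteq> {}) \<and>
        (\<forall>i<length Cs. \<forall>j<length Cs. i \<noteq> j \<longrightarrow> Cs ! i \<inter> Cs ! j = {}) \<and>
        (\<Union>i<length Cs. Cs ! i) = {..<n} \<and>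
        (\<forall>i<length bs. bs ! i > 0))"

fun iid_pmf :: "nat \<Rightarrow> 'a pmf \<Rightarrow> 'a list pmf" where
  "iid_pmf 0 p = return_pmf []"
| "iid_pmf (Suc b) p = bind_pmf p (\<lambda>x. map_pmf (Cons x) (iid_pmf b p))"

fun seq_pmf :: "'a pmf list \<Rightarrow> 'a list pmf" where
  "seq_pmf [] = return_pmf []"
| "seq_pmf (p # ps) = bind_pmf p (\<lambda>x. map_pmf (Cons x) (seq_pmf ps))"

definition sample_pmf :: "choice \<Rightarrow> nat list list pmf" where
  "sample_pmf c = seq_pmf (map2 (\<lambda>C b. iid_pmf b (pmf_of_set C)) (fst c) (snd c))"

definition stoch_grad :: "nat \<Rightarrow> (nat \<Rightarrow> 'a \<Rightarrow> 'a::real_vector) \<Rightarrow> 'a \<Rightarrow> choice \<Rightarrow> nat list list \<Rightarrow> 'a" where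
  "stoch_grad n grad w c B = (1 / real n) *\<^sub>R
     (\<Sum>i<length (fst c). (real (card (fst c ! i)) / real (snd c ! i)) *\<^sub>R
        sum_list (map (\<lambda>s. grad s w) (B ! i)))"

text \<open>Histories are lists of past step samples, most recent first. The choice at a step is a
  (deterministic) function pol of the history; w_hist h is the current iterate
  (w_{t} for a history of length t-1).\<close>
fun w_hist :: "nat \<Rightarrow> (nat \<Rightarrow> 'a \<Rightarrow> 'a::real_vector) \<Rightarrow> (nat list list list \<Rightarrow> choice) \<Rightarrow> real
               \<Rightarrow> nat list list list \<Rightarrow> 'a" where
  "w_hist n grad pol \<eta> [] = 0"
| "w_hist n grad pol \<eta> (B # h) =
     w_hist n grad pol \<eta> h - \<eta> *\<^sub>R stoch_grad n grad (w_hist n grad pol \<eta> h) (pol h) B"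

fun hist_pmf :: "(nat list list list \<Rightarrow> choice) \<Rightarrow> nat \<Rightarrow> nat list list list pmf" where
  "hist_pmf pol 0 = return_pmf []"
| "hist_pmf pol (Suc t) = bind_pmf (hist_pmf pol t) (\<lambda>h. map_pmf (\<lambda>B. B # h) (sample_pmf (pol h)))"

definition cond_var :: "nat \<Rightarrow> (nat \<Rightarrow> 'a \<Rightarrow> 'a::real_inner) \<Rightarrow> (nat list list list \<Rightarrow> choice) \<Rightarrow> real
                        \<Rightarrow> nat list list list \<Rightarrow> real" where
  "cond_var n grad pol \<eta> h =
     measure_pmf.expectation (sample_pmf (pol h))
       (\<lambda>B. (norm (stoch_grad n grad (w_hist n grad pol \<eta> h) (pol h) B
                   - avg n grad (w_hist n grad pol \<eta> h)))\<^sup>2)"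

end

theory Submission
  imports Defs
begin

lemma norm_sq_diff: "(norm (u - v))\<^sup>2 = (norm u)\<^sup>2 - 2 * (u \<bullet> v) + (norm (v::'a::real_inner))\<^sup>2"
  by (simp add: power2_norm_eq_inner inner_diff_left inner_diff_right inner_commute)

lemma norm_sq_diff_scale: "(norm (a - c *\<^sub>R b))\<^sup>2 = (norm a)\<^sup>2 - 2*c*(a \<bullet> b) + c\<^sup>2 * (norm (b::'a::real_inner))\<^sup>2"
  by (simp add: norm_sq_diff power_mult_distrib)

lemma grad_zero:
  fixes f :: "'a::real_inner \<Rightarrow> real"
  assumes sm: "smooth_grad \<gamma> f f'" and g: "\<gamma> > 0" and mn: "\<And>u. f ws \<le> f u"
  shows "f' ws = 0"
proof -
  let ?g = "f' ws"
  have "f (ws - \<gamma> *\<^sub>R ?g) \<le> f ws + ?g \<bullet> (ws - \<gamma> *\<^sub>R ?g - ws) + 1/(2*\<gamma>) * (norm (ws - \<gamma> *\<^sub>R ?g - ws))\<^sup>2"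
    using sm unfolding smooth_grad_def by blast
  also have "\<dots> = f ws - \<gamma>/2 * (norm ?g)\<^sup>2"
  proof -
    have a: "?g \<bullet> (ws - \<gamma> *\<^sub>R ?g - ws) = - \<gamma> * (norm ?g)\<^sup>2"
      by (simp add: dot_square_norm)
    have b: "(norm (ws - \<gamma> *\<^sub>R ?g - ws))\<^sup>2 = \<gamma>\<^sup>2 * (norm ?g)\<^sup>2"
      using g by (simp add: power_mult_distrib)
    show ?thesis unfolding a b using g by (simp add: power2_eq_square field_simps)
  qed
  finally have "\<gamma>/2 * (norm ?g)\<^sup>2 \<le> 0" using mn[of "ws - \<gamma> *\<^sub>R ?g"] by linarith
  with g have "(norm ?g)\<^sup>2 \<le> 0" by (simp add: mult_le_0_iff)
  thus ?thesis by simp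
qed

lemma coco_gen:
  fixes g :: "'a::real_inner \<Rightarrow> real"
  assumes cv: "\<And>u v. g u \<ge> g v + g' v \<bullet> (u - v)"
    and sm: "\<And>u v. g u \<le> g v + g' v \<bullet> (u - v) + K/2 * (norm (u - v))\<^sup>2"
    and r: "r \<ge> 0"
  shows "(2*r - K*r^2) * (norm (g' y - g' x))\<^sup>2 \<le> (g' y - g' x) \<bullet> (y - x)"
proof -
  define e where "e = g' y - g' x"
  have 1: "g (y - r *\<^sub>R e) \<ge> g x + g' x \<bullet> (y - r *\<^sub>R e - x)" by (rule cv)
  have 2: "g (y - r *\<^sub>R e) \<le> g y + g' y \<bullet> (y - r *\<^sub>R e - y) + K/2 * (norm (y - r *\<^sub>R e - y))\<^sup>2" by (rule sm)
  have 3: "g (x + r *\<^sub>R e) \<ge> g y + g' y \<bullet> (x + r *\<^sub>R e - y)" by (rule cv)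
  have 4: "g (x + r *\<^sub>R e) \<le> g x + g' x \<bullet> (x + r *\<^sub>R e - x) + K/2 * (norm (x + r *\<^sub>R e - x))\<^sup>2" by (rule sm)
  have n: "(norm (y - r *\<^sub>R e - y))\<^sup>2 = r\<^sup>2 * (norm e)\<^sup>2" "(norm (x + r *\<^sub>R e - x))\<^sup>2 = r\<^sup>2 * (norm e)\<^sup>2"
    by (simp_all add: power_mult_distrib)
  have "g' x \<bullet> (y - r *\<^sub>R e - x) + g' y \<bullet> (x + r *\<^sub>R e - y) - g' y \<bullet> (y - r *\<^sub>R e - y) - g' x \<bullet> (x + r *\<^sub>R e - x)
      = 2*r * (e \<bullet> e) - e \<bullet> (y - x)"
    unfolding e_def by (simp add: inner_diff_left inner_diff_right inner_add_left inner_add_right algebra_simps)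
  moreover have "e \<bullet> e = (norm e)\<^sup>2" by (simp add: power2_norm_eq_inner)
  ultimately have "2*r*(norm e)\<^sup>2 - e \<bullet> (y - x) \<le> K * r^2 * (norm e)\<^sup>2"
    using 1 2 3 4 n by (simp add: algebra_simps)
  thus ?thesis unfolding e_def[symmetric] by (simp add: algebra_simps)
qed

lemma coco_f:
  fixes f :: "'a::real_inner \<Rightarrow> real"
  assumes sc: "strongly_convex_grad \<mu> f f'" and sm: "smooth_grad \<gamma> f f'"
  shows "(norm (f' y - f' x))\<^sup>2 + \<mu> * (1/\<gamma>) * (norm (y - x))\<^sup>2 \<le> (1/\<gamma> + \<mu>) * ((f' y - f' x) \<bullet> (y - x))"
proof -
  define L where "L = 1/\<gamma>"
  define K where "K = L - \<mu>"
  define g where "g u = f u - \<mu>/2 * (norm u)\<^sup>2" for u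
  define g' where "g' u = f' u - \<mu> *\<^sub>R u" for u
  have key: "(norm u)\<^sup>2 - (norm v)\<^sup>2 - 2 * (v \<bullet> (u - v)) = (norm (u - v))\<^sup>2" for u v :: 'a
    by (simp add: norm_sq_diff inner_diff_right inner_commute dot_square_norm)
  have cv: "g u \<ge> g v + g' v \<bullet> (u - v)" for u v
  proof -
    have "f u \<ge> f v + f' v \<bullet> (u - v) + \<mu>/2 * (norm (u - v))\<^sup>2" using sc unfolding strongly_convex_grad_def by blast
    moreover have "\<mu>/2 * (norm (u - v))\<^sup>2 = \<mu>/2*(norm u)\<^sup>2 - \<mu>/2*(norm v)\<^sup>2 - \<mu>*(v \<bullet> u) + \<mu>*(v \<bullet> v)"
      by (simp add: norm_sq_diff dot_square_norm inner_commute algebra_simps)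
    moreover have "g' v \<bullet> (u - v) = f' v \<bullet> (u - v) - \<mu> * (v \<bullet> u) + \<mu> * (v \<bullet> v)"
      unfolding g'_def by (simp add: inner_diff_left inner_diff_right)
    ultimately show ?thesis unfolding g_def by linarith
  qed
  have smg: "g u \<le> g v + g' v \<bullet> (u - v) + K/2 * (norm (u - v))\<^sup>2" for u v
  proof -
    have "f u \<le> f v + f' v \<bullet> (u - v) + 1/(2*\<gamma>) * (norm (u - v))\<^sup>2" using sm unfolding smooth_grad_def by blast
    moreover have "1/(2*\<gamma>) * (norm (u - v))\<^sup>2 = K/2 * (norm (u - v))\<^sup>2 + \<mu>/2 * (norm (u - v))\<^sup>2"
      unfolding K_def L_def by (simp add: field_simps)
    moreover have "\<mu>/2 * (norm (u - v))\<^sup>2 = \<mu>/2*(norm u)\<^sup>2 - \<mu>/2*(norm v)\<^sup>2 - \<mu>*(v \<bullet> u) + \<mu>*(v \<bullet> v)"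
      by (simp add: norm_sq_diff dot_square_norm inner_commute algebra_simps)
    moreover have "g' v \<bullet> (u - v) = f' v \<bullet> (u - v) - \<mu> * (v \<bullet> u) + \<mu> * (v \<bullet> v)"
      unfolding g'_def by (simp add: inner_diff_left inner_diff_right)
    ultimately show ?thesis unfolding g_def by linarith
  qed
  define E where "E = g' y - g' x"
  have EE: "E = (f' y - f' x) - \<mu> *\<^sub>R (y - x)" unfolding E_def g'_def by (simp add: algebra_simps)
  have main: "(norm E)\<^sup>2 \<le> K * (E \<bullet> (y - x))"
  proof (cases "K > 0")
    case True
    have "(2*(1/K) - K*(1/K)^2) * (norm E)\<^sup>2 \<le> E \<bullet> (y - x)"
      unfolding E_def by (rule coco_gen[OF cv smg]) (use True in simp)
    moreover have "2*(1/K) - K*(1/K)^2 = 1/K" using True by (simp add: power2_eq_square field_simps)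
    ultimately have "(norm E)\<^sup>2 / K \<le> E \<bullet> (y - x)" by simp
    thus ?thesis using True by (simp add: field_simps)
  next
    case False
    have h: "(2*r - K*r^2) * (norm E)\<^sup>2 \<le> E \<bullet> (y - x)" if "r \<ge> 0" for r
      unfolding E_def by (rule coco_gen[OF cv smg]) (use that in simp)
    have h2: "2*r * (norm E)\<^sup>2 \<le> E \<bullet> (y - x)" if "r \<ge> 0" for r
    proof -
      have "2*r * (norm E)\<^sup>2 \<le> (2*r - K*r^2) * (norm E)\<^sup>2"
        using False that by (intro mult_right_mono) (auto simp: mult_nonpos_nonneg)
      thus ?thesis using h[OF that] by linarith
    qed
    have "E = 0"
    proof (rule ccontr)
      assume "E \<noteq> 0"
      hence p: "(norm E)\<^sup>2 > 0" by simp
      define r where "r = (\<bar>E \<bullet> (y - x)\<bar> + 1) / (norm E)\<^sup>2"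
      have "r \<ge> 0" unfolding r_def using p by simp
      from h2[OF this] have "2 * (\<bar>E \<bullet> (y - x)\<bar> + 1) \<le> E \<bullet> (y - x)"
        unfolding r_def using p by simp
      thus False by (smt (verit) abs_ge_self)
    qed
    thus ?thesis by simp
  qed
  have n1: "(norm E)\<^sup>2 = (norm (f' y - f' x))\<^sup>2 - 2*\<mu>*((f' y - f' x) \<bullet> (y - x)) + \<mu>\<^sup>2 * (norm (y - x))\<^sup>2"
    unfolding EE by (rule norm_sq_diff_scale)
  have n2: "E \<bullet> (y - x) = (f' y - f' x) \<bullet> (y - x) - \<mu> * (norm (y - x))\<^sup>2"
    unfolding EE by (simp add: inner_diff_left dot_square_norm)
  show ?thesis using main unfolding n1 n2 K_def L_def by (simp add: algebra_simps power2_eq_square)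
qed

lemma contract:
  fixes f :: "'a::real_inner \<Rightarrow> real"
  assumes sc: "strongly_convex_grad \<mu> f f'" and sm: "smooth_grad \<gamma> f f'"
    and g: "\<gamma> > 0" and m: "\<mu> > 0" and z: "f' ws = 0"
    and e1: "0 < \<eta>" and e2: "\<eta> \<le> 2 / (\<mu> + 1/\<gamma>)"
  shows "(norm (w - ws - \<eta> *\<^sub>R f' w))\<^sup>2 \<le> (1 - (2 * \<eta> * \<mu> / \<gamma>) / (\<mu> + 1 / \<gamma>)) * (norm (w - ws))\<^sup>2"
proof -
  define L where "L = 1/\<gamma>"
  have L: "L > 0" using g unfolding L_def by simp
  define a where "a = f' w \<bullet> (w - ws)"
  define b where "b = (norm (w - ws))\<^sup>2"
  define c where "c = (norm (f' w))\<^sup>2"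
  have co: "c + \<mu> * L * b \<le> (L + \<mu>) * a"
    using coco_f[OF sc sm, of w ws] unfolding a_def b_def c_def L_def z by simp
  have lhs: "(norm (w - ws - \<eta> *\<^sub>R f' w))\<^sup>2 = b - 2*\<eta>*a + \<eta>\<^sup>2 * c"
    unfolding a_def b_def c_def by (simp add: norm_sq_diff_scale inner_commute)
  have al: "(2 * \<eta> * \<mu> / \<gamma>) / (\<mu> + 1 / \<gamma>) = 2*\<eta>*\<mu>*L/(\<mu>+L)" unfolding L_def by simp
  have s: "\<mu> + L > 0" using L m by simp
  have e2': "\<eta> * (\<mu> + L) \<le> 2" using e2 s unfolding L_def by (simp add: field_simps)
  have c0: "c \<ge> 0" unfolding c_def by simp
  have "(\<mu>+L) * (b - 2*\<eta>*a + \<eta>\<^sup>2 * c) = (\<mu>+L)*b - 2*\<eta>*((L+\<mu>)*a) + \<eta>\<^sup>2*(\<mu>+L)*c"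
    by (simp add: algebra_simps)
  also have "\<dots> \<le> (\<mu>+L)*b - 2*\<eta>*(c + \<mu>*L*b) + \<eta>\<^sup>2*(\<mu>+L)*c"
    using co e1 by (simp add: mult_left_mono)
  also have "\<dots> = (\<mu>+L)*b - 2*\<eta>*\<mu>*L*b - \<eta>*c*(2 - \<eta>*(\<mu>+L))"
    by (simp add: algebra_simps power2_eq_square)
  also have "\<dots> \<le> (\<mu>+L)*b - 2*\<eta>*\<mu>*L*b"
    using e1 c0 e2' by simp
  also have "\<dots> = (\<mu>+L) * ((1 - 2*\<eta>*\<mu>*L/(\<mu>+L)) * b)"
    using s by (simp add: field_simps)
  finally have "b - 2*\<eta>*a + \<eta>\<^sup>2 * c \<le> (1 - 2*\<eta>*\<mu>*L/(\<mu>+L)) * b"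
    using s by simp
  thus ?thesis unfolding lhs al b_def .
qed

lemma alpha_bounds:
  fixes H \<gamma> \<eta> :: real
  assumes "H > 0" "\<gamma> > 0" "0 < \<eta>" "\<eta> \<le> 2 / (H + 1 / \<gamma>)"
  shows "((H - 1 / \<gamma>) / (H + 1 / \<gamma>))\<^sup>2 \<le> 1 - (2 * \<eta> * H / \<gamma>) / (H + 1 / \<gamma>)"
    and "1 - (2 * \<eta> * H / \<gamma>) / (H + 1 / \<gamma>) < 1"
proof -
  define L where "L = 1/\<gamma>"
  have L: "L > 0" using assms unfolding L_def by simp
  have s: "H + L > 0" using L assms by simp
  have al: "(2 * \<eta> * H / \<gamma>) / (H + 1 / \<gamma>) = 2*\<eta>*H*L/(H+L)" unfolding L_def by simp
  have e2': "\<eta> * (H + L) \<le> 2" using assms s unfolding L_def by (simp add: field_simps)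
  show "1 - (2 * \<eta> * H / \<gamma>) / (H + 1 / \<gamma>) < 1" unfolding al using assms L s by simp
  have eq1: "(1 - 2*\<eta>*H*L/(H+L)) - ((H - L)/(H+L))\<^sup>2 = ((H+L)^2 - 2*\<eta>*H*L*(H+L) - (H-L)^2) / (H+L)\<^sup>2"
  proof -
    have p: "((H - L)/(H+L))^2 = (H-L)^2/(H+L)^2" by (simp add: power_divide)
    have q: "2*\<eta>*H*L/(H+L) = 2*\<eta>*H*L*(H+L)/(H+L)^2" using s by (simp add: power2_eq_square)
    have r: "(1::real) = (H+L)^2/(H+L)^2" using s by simp
    show ?thesis unfolding p by (subst q, subst r) (simp add: diff_divide_distrib)
  qed
  have eq2: "(H+L)^2 - 2*\<eta>*H*L*(H+L) - (H-L)^2 = 2*H*L*(2 - \<eta>*(H+L))"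
    by (simp add: algebra_simps power2_eq_square)
  have "2*H*L*(2 - \<eta>*(H+L)) / (H+L)\<^sup>2 \<ge> 0" using assms L e2' by simp
  hence "((H - L)/(H+L))\<^sup>2 \<le> 1 - 2*\<eta>*H*L/(H+L)" using eq1 unfolding eq2 by linarith
  thus "((H - 1 / \<gamma>) / (H + 1 / \<gamma>))\<^sup>2 \<le> 1 - (2 * \<eta> * H / \<gamma>) / (H + 1 / \<gamma>)"
    unfolding al L_def .
qed


lemma fin_iid: "finite (set_pmf p) \<Longrightarrow> finite (set_pmf (iid_pmf b p))"
  by (induction b) auto

lemma fin_seq: "(\<And>p. p \<in> set ps \<Longrightarrow> finite (set_pmf p)) \<Longrightarrow> finite (set_pmf (seq_pmf ps))"
  by (induction ps) auto

lemma valid_choice_D: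
  assumes "valid_choice n c"
  shows "length (fst c) = length (snd c)" "\<And>i. i < length (fst c) \<Longrightarrow> fst c ! i \<noteq> {}"
    "\<And>i j. i < length (fst c) \<Longrightarrow> j < length (fst c) \<Longrightarrow> i \<noteq> j \<Longrightarrow> fst c ! i \<inter> fst c ! j = {}"
    "(\<Union>i<length (fst c). fst c ! i) = {..<n}"
    "\<And>i. i < length (snd c) \<Longrightarrow> snd c ! i > 0"
    "\<And>i. i < length (fst c) \<Longrightarrow> finite (fst c ! i)"
proof -
  show "length (fst c) = length (snd c)" "\<And>i. i < length (fst c) \<Longrightarrow> fst c ! i \<noteq> {}"
    "\<And>i j. i < length (fst c) \<Longrightarrow> j < length (fst c) \<Longrightarrow> i \<noteq> j \<Longrightarrow> fst c ! i \<inter> fst c ! j = {}"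
    "(\<Union>i<length (fst c). fst c ! i) = {..<n}"
    "\<And>i. i < length (snd c) \<Longrightarrow> snd c ! i > 0"
    using assms unfolding valid_choice_def Let_def by auto
  fix i assume "i < length (fst c)"
  hence "fst c ! i \<subseteq> {..<n}" using \<open>(\<Union>i<length (fst c). fst c ! i) = {..<n}\<close> by blast
  thus "finite (fst c ! i)" using finite_subset by blast
qed

lemma fin_sample:
  assumes "valid_choice n c"
  shows "finite (set_pmf (sample_pmf c))"
  unfolding sample_pmf_def
proof (rule fin_seq)
  fix p assume "p \<in> set (map2 (\<lambda>C b. iid_pmf b (pmf_of_set C)) (fst c) (snd c))"
  then obtain i where i: "i < length (fst c)" "i < length (snd c)"
    and p: "p = iid_pmf (snd c ! i) (pmf_of_set (fst c ! i))"
    by (auto simp: in_set_conv_nth)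
  show "finite (set_pmf p)" unfolding p
    using valid_choice_D[OF assms] i by (intro fin_iid) simp
qed

lemma fin_hist:
  assumes "\<And>h. finite (set_pmf (sample_pmf (pol h)))"
  shows "finite (set_pmf (hist_pmf pol t))"
  by (induction t) (auto simp: assms)

lemma integral_bind_finite:
  fixes f :: "'b \<Rightarrow> 'c::{banach, second_countable_topology}"
  assumes M: "finite (set_pmf M)" and N: "\<And>x. x \<in> set_pmf M \<Longrightarrow> finite (set_pmf (N x))"
  shows "measure_pmf.expectation (bind_pmf M N) f = measure_pmf.expectation M (\<lambda>x. measure_pmf.expectation (N x) f)"
proof -
  define S where "S = set_pmf (bind_pmf M N)"
  have S: "finite S" unfolding S_def using M N by auto
  have "measure_pmf.expectation (bind_pmf M N) f = (\<Sum>y\<in>S. pmf (bind_pmf M N) y *\<^sub>R f y)"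
    by (rule integral_measure_pmf[OF S]) (auto simp: S_def)
  also have "\<dots> = (\<Sum>y\<in>S. (\<Sum>x\<in>set_pmf M. pmf M x * pmf (N x) y) *\<^sub>R f y)"
  proof (rule sum.cong[OF refl])
    fix y
    have "pmf (bind_pmf M N) y = measure_pmf.expectation M (\<lambda>x. pmf (N x) y)" by (rule pmf_bind)
    also have "\<dots> = (\<Sum>x\<in>set_pmf M. pmf M x *\<^sub>R pmf (N x) y)"
      by (rule integral_measure_pmf[OF M]) auto
    finally show "pmf (bind_pmf M N) y *\<^sub>R f y = (\<Sum>x\<in>set_pmf M. pmf M x * pmf (N x) y) *\<^sub>R f y" by simp
  qed
  also have "\<dots> = (\<Sum>x\<in>set_pmf M. pmf M x *\<^sub>R (\<Sum>y\<in>S. pmf (N x) y *\<^sub>R f y))"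
    by (simp add: scaleR_sum_left scaleR_sum_right sum.swap[of _ S])
  also have "\<dots> = (\<Sum>x\<in>set_pmf M. pmf M x *\<^sub>R measure_pmf.expectation (N x) f)"
  proof (rule sum.cong[OF refl])
    fix x assume x: "x \<in> set_pmf M"
    have "measure_pmf.expectation (N x) f = (\<Sum>y\<in>S. pmf (N x) y *\<^sub>R f y)"
      by (rule integral_measure_pmf[OF S]) (use x in \<open>auto simp: S_def\<close>)
    thus "pmf M x *\<^sub>R (\<Sum>y\<in>S. pmf (N x) y *\<^sub>R f y) = pmf M x *\<^sub>R measure_pmf.expectation (N x) f" by simp
  qed
  also have "\<dots> = measure_pmf.expectation M (\<lambda>x. measure_pmf.expectation (N x) f)"
    by (rule integral_measure_pmf[OF M, symmetric]) auto
  finally show ?thesis .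
qed

lemma seq_marginal: "i < length ps \<Longrightarrow> map_pmf (\<lambda>B. B ! i) (seq_pmf ps) = ps ! i"
proof (induction ps arbitrary: i)
  case Nil thus ?case by simp
next
  case (Cons p ps)
  show ?case
  proof (cases i)
    case 0
    thus ?thesis by (simp add: map_bind_pmf map_pmf_comp bind_return_pmf')
  next
    case (Suc j)
    with Cons show ?thesis by (simp add: map_bind_pmf map_pmf_comp)
  qed
qed

lemma iid_sum:
  fixes G :: "nat \<Rightarrow> 'a::euclidean_space"
  assumes "finite (set_pmf p)"
  shows "measure_pmf.expectation (iid_pmf b p) (\<lambda>L. sum_list (map G L)) = real b *\<^sub>R measure_pmf.expectation p G"
proof (induction b)
  case 0 thus ?case by simp
next
  case (Suc b)
  have "measure_pmf.expectation (iid_pmf (Suc b) p) (\<lambda>L. sum_list (map G L))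
     = measure_pmf.expectation p (\<lambda>x. measure_pmf.expectation (iid_pmf b p) (\<lambda>L. G x + sum_list (map G L)))"
    by (simp add: integral_bind_finite[OF assms] fin_iid[OF assms])
  also have "\<dots> = measure_pmf.expectation p (\<lambda>x. G x + real b *\<^sub>R measure_pmf.expectation p G)"
  proof (rule Bochner_Integration.integral_cong[OF refl])
    fix x
    show "measure_pmf.expectation (iid_pmf b p) (\<lambda>L. G x + sum_list (map G L)) = G x + real b *\<^sub>R measure_pmf.expectation p G"
    proof -
      have "measure_pmf.expectation (iid_pmf b p) (\<lambda>L. G x + sum_list (map G L)) = measure_pmf.expectation (iid_pmf b p) (\<lambda>L. G x) + measure_pmf.expectation (iid_pmf b p) (\<lambda>L. sum_list (map G L))"
        by (rule Bochner_Integration.integral_add) (auto simp: integrable_measure_pmf_finite fin_iid[OF assms])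
      thus ?thesis using Suc by (simp add: measure_pmf.prob_space)
    qed
  qed
  also have "\<dots> = real (Suc b) *\<^sub>R measure_pmf.expectation p G"
    by (subst Bochner_Integration.integral_add) (auto simp: integrable_measure_pmf_finite assms algebra_simps)
  finally show ?case .
qed

lemma integral_pmf_of_set_vec:
  fixes G :: "nat \<Rightarrow> 'a::euclidean_space"
  assumes "finite C" "C \<noteq> {}"
  shows "measure_pmf.expectation (pmf_of_set C) G = (1 / real (card C)) *\<^sub>R (\<Sum>s\<in>C. G s)"
proof -
  have "measure_pmf.expectation (pmf_of_set C) G = (\<Sum>s\<in>C. pmf (pmf_of_set C) s *\<^sub>R G s)"
    by (rule integral_measure_pmf[OF assms(1)]) (use assms in auto)
  also have "\<dots> = (\<Sum>s\<in>C. (1 / real (card C)) *\<^sub>R G s)"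
    using assms by (intro sum.cong) auto
  finally show ?thesis by (simp add: scaleR_sum_right)
qed

lemma unbiased:
  fixes grad :: "nat \<Rightarrow> 'a \<Rightarrow> 'a::euclidean_space"
  assumes c: "valid_choice n c"
  shows "measure_pmf.expectation (sample_pmf c) (stoch_grad n grad w c) = avg n grad w"
proof -
  note V = valid_choice_D[OF c]
  define k where "k = length (fst c)"
  define G where "G s = grad s w" for s
  have fin: "finite (set_pmf (sample_pmf c))" by (rule fin_sample[OF c])
  have int: "integrable (measure_pmf (sample_pmf c)) f" for f :: "_ \<Rightarrow> 'a"
    by (rule integrable_measure_pmf_finite[OF fin])
  have comp: "measure_pmf.expectation (sample_pmf c) (\<lambda>B. sum_list (map G (B ! i))) = real (snd c ! i) *\<^sub>R ((1 / real (card (fst c ! i))) *\<^sub>R (\<Sum>s\<in>fst c ! i. G s))"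
    if i: "i < k" for i
  proof -
    have len: "i < length (map2 (\<lambda>C b. iid_pmf b (pmf_of_set C)) (fst c) (snd c))" using i V(1) unfolding k_def by simp
    have "measure_pmf.expectation (sample_pmf c) (\<lambda>B. sum_list (map G (B ! i)))
       = measure_pmf.expectation (map_pmf (\<lambda>B. B ! i) (sample_pmf c)) (\<lambda>L. sum_list (map G L))" by simp
    also have "map_pmf (\<lambda>B. B ! i) (sample_pmf c) = iid_pmf (snd c ! i) (pmf_of_set (fst c ! i))"
      unfolding sample_pmf_def using seq_marginal[OF len] len by simp
    also have "measure_pmf.expectation (iid_pmf (snd c ! i) (pmf_of_set (fst c ! i))) (\<lambda>L. sum_list (map G L))
       = real (snd c ! i) *\<^sub>R measure_pmf.expectation (pmf_of_set (fst c ! i)) G"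
      by (rule iid_sum) (use V i k_def in auto)
    also have "\<dots> = real (snd c ! i) *\<^sub>R ((1 / real (card (fst c ! i))) *\<^sub>R (\<Sum>s\<in>fst c ! i. G s))"
      using V i k_def by (simp add: integral_pmf_of_set_vec)
    finally show ?thesis by simp
  qed
  have "measure_pmf.expectation (sample_pmf c) (stoch_grad n grad w c)
     = (1 / real n) *\<^sub>R (\<Sum>i<k. (real (card (fst c ! i)) / real (snd c ! i)) *\<^sub>R
          measure_pmf.expectation (sample_pmf c) (\<lambda>B. sum_list (map G (B ! i))))"
    unfolding stoch_grad_def k_def G_def
    by (simp add: integral_sum int)
  also have "\<dots> = (1 / real n) *\<^sub>R (\<Sum>i<k. (\<Sum>s\<in>fst c ! i. G s))"
  proof -
    have "(real (card (fst c ! i)) / real (snd c ! i)) *\<^sub>R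
          measure_pmf.expectation (sample_pmf c) (\<lambda>B. sum_list (map G (B ! i))) = (\<Sum>s\<in>fst c ! i. G s)"
      if i: "i < k" for i
    proof -
      have b: "real (snd c ! i) > 0" using V(5)[of i] V(1) i k_def by simp
      have cd: "real (card (fst c ! i)) > 0" using V(2)[of i] V(6)[of i] i k_def by (simp add: card_gt_0_iff)
      show ?thesis unfolding comp[OF i] using b cd by simp
    qed
    hence "(\<Sum>i<k. (real (card (fst c ! i)) / real (snd c ! i)) *\<^sub>R
          measure_pmf.expectation (sample_pmf c) (\<lambda>B. sum_list (map G (B ! i)))) = (\<Sum>i<k. (\<Sum>s\<in>fst c ! i. G s))"
      by (intro sum.cong) auto
    thus ?thesis by simp
  qed
  also have "(\<Sum>i<k. (\<Sum>s\<in>fst c ! i. G s)) = (\<Sum>s\<in>(\<Union>i<k. fst c ! i). G s)"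
    by (rule sum.UNION_disjoint[symmetric]) (use V k_def in auto)
  also have "(\<Union>i<k. fst c ! i) = {..<n}" using V k_def by simp
  finally show ?thesis unfolding avg_def G_def by simp
qed

lemma var_decomp:
  fixes g :: "'b \<Rightarrow> 'a::euclidean_space"
  assumes fin: "finite (set_pmf Q)" and m: "measure_pmf.expectation Q g = m"
  shows "measure_pmf.expectation Q (\<lambda>B. (norm (x - \<eta> *\<^sub>R g B))\<^sup>2)
       = (norm (x - \<eta> *\<^sub>R m))\<^sup>2 + \<eta>\<^sup>2 * measure_pmf.expectation Q (\<lambda>B. (norm (g B - m))\<^sup>2)"
proof -
  have int: "integrable (measure_pmf Q) f" for f :: "_ \<Rightarrow> 'c::{banach, second_countable_topology}"
    by (rule integrable_measure_pmf_finite[OF fin])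
  have pt: "(norm (x - \<eta> *\<^sub>R g B))\<^sup>2 = (norm (x - \<eta> *\<^sub>R m))\<^sup>2 - 2 * \<eta> * ((x - \<eta> *\<^sub>R m) \<bullet> (g B - m)) + \<eta>\<^sup>2 * (norm (g B - m))\<^sup>2" for B
  proof -
    have "x - \<eta> *\<^sub>R g B = (x - \<eta> *\<^sub>R m) - \<eta> *\<^sub>R (g B - m)" by (simp add: algebra_simps)
    thus ?thesis by (simp only: norm_sq_diff_scale)
  qed
  have z: "measure_pmf.expectation Q (\<lambda>B. (x - \<eta> *\<^sub>R m) \<bullet> (g B - m)) = 0"
  proof -
    have "measure_pmf.expectation Q (\<lambda>B. (x - \<eta> *\<^sub>R m) \<bullet> (g B - m)) = (x - \<eta> *\<^sub>R m) \<bullet> measure_pmf.expectation Q (\<lambda>B. g B - m)"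
      by (rule integral_inner_right) (rule int)
    also have "measure_pmf.expectation Q (\<lambda>B. g B - m) = 0"
    proof -
      have "measure_pmf.expectation Q (\<lambda>B. g B - m) = measure_pmf.expectation Q g - measure_pmf.expectation Q (\<lambda>B. m)"
        by (rule Bochner_Integration.integral_diff) (auto simp: int)
      thus ?thesis using m by (simp add: measure_pmf.prob_space)
    qed
    finally show ?thesis by simp
  qed
  show ?thesis unfolding pt
    by (simp add: Bochner_Integration.integral_diff Bochner_Integration.integral_add int z)
qed


theorem theorem2:
  fixes n :: nat and \<phi> :: "nat \<Rightarrow> 'a::euclidean_space \<Rightarrow> real" and grad :: "nat \<Rightarrow> 'a \<Rightarrow> 'a"
    and H \<gamma> \<eta> :: real and wstar :: 'a
    and pol :: "nat list list list \<Rightarrow> choice"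
  assumes n_pos: "n > 0"
    and grad: "\<And>i w. i < n \<Longrightarrow> (\<phi> i has_derivative (\<lambda>v. grad i w \<bullet> v)) (at w)"
    and H_pos: "H > 0" and gamma_pos: "\<gamma> > 0"
    and sc: "strongly_convex_grad H (avg n \<phi>) (avg n grad)"
    and sm: "smooth_grad \<gamma> (avg n \<phi>) (avg n grad)"
    and wstar: "\<And>w. avg n \<phi> wstar \<le> avg n \<phi> w"
    and eta: "0 < \<eta>" "\<eta> \<le> 2 / (H + 1 / \<gamma>)"
    and pol: "\<And>h. valid_choice n (pol h)"
  shows "(let \<alpha> = 1 - (2 * \<eta> * H / \<gamma>) / (H + 1 / \<gamma>) in
           ((H - 1 / \<gamma>) / (H + 1 / \<gamma>))\<^sup>2 \<le> \<alpha> \<and> \<alpha> < 1 \<and>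
           (\<forall>T \<ge> 1.
              measure_pmf.expectation (hist_pmf pol T) (\<lambda>h. avg n \<phi> (w_hist n grad pol \<eta> h))
                - avg n \<phi> wstar
              \<le> \<alpha> ^ T / (2 * \<gamma>) * (norm wstar)\<^sup>2
                 + \<eta>\<^sup>2 / (2 * \<gamma>) * (\<Sum>t = 1..T. \<alpha> ^ (T - t) *
                     measure_pmf.expectation (hist_pmf pol (t - 1)) (cond_var n grad pol \<eta>))))"
proof -
  define \<alpha> where "\<alpha> = 1 - (2 * \<eta> * H / \<gamma>) / (H + 1 / \<gamma>)"
  define f where "f = avg n \<phi>"
  define f' where "f' = avg n grad"
  define W where "W = w_hist n grad pol \<eta>"
  have ab: "((H - 1 / \<gamma>) / (H + 1 / \<gamma>))\<^sup>2 \<le> \<alpha>" "\<alpha> < 1"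
    unfolding \<alpha>_def using alpha_bounds[OF H_pos gamma_pos eta] by auto
  have a0: "\<alpha> \<ge> 0" using ab(1) by (meson order_trans zero_le_power2)
  have z: "f' wstar = 0" unfolding f'_def by (rule grad_zero[OF sm gamma_pos wstar])
  have finS: "finite (set_pmf (sample_pmf (pol h)))" for h by (rule fin_sample[OF pol])
  have finH: "finite (set_pmf (hist_pmf pol t))" for t by (rule fin_hist[OF finS])
  have intH: "integrable (measure_pmf (hist_pmf pol t)) g" for t and g :: "_ \<Rightarrow> real"
    by (rule integrable_measure_pmf_finite[OF finH])
  define R where "R t = measure_pmf.expectation (hist_pmf pol t) (\<lambda>h. (norm (W h - wstar))\<^sup>2)" for t
  define V where "V t = measure_pmf.expectation (hist_pmf pol t) (cond_var n grad pol \<eta>)" for t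
  have inner: "measure_pmf.expectation (sample_pmf (pol h)) (\<lambda>B. (norm (W (B # h) - wstar))\<^sup>2)
      \<le> \<alpha> * (norm (W h - wstar))\<^sup>2 + \<eta>\<^sup>2 * cond_var n grad pol \<eta> h" for h
  proof -
    have eqW: "W (B # h) - wstar = (W h - wstar) - \<eta> *\<^sub>R stoch_grad n grad (W h) (pol h) B" for B
      unfolding W_def by (simp add: algebra_simps)
    have "measure_pmf.expectation (sample_pmf (pol h)) (\<lambda>B. (norm (W (B # h) - wstar))\<^sup>2)
       = (norm (W h - wstar - \<eta> *\<^sub>R f' (W h)))\<^sup>2 + \<eta>\<^sup>2 * cond_var n grad pol \<eta> h"
      unfolding eqW
      by (subst var_decomp[OF finS]) (auto simp: unbiased[OF pol] f'_def cond_var_def W_def)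
    also have "\<dots> \<le> \<alpha> * (norm (W h - wstar))\<^sup>2 + \<eta>\<^sup>2 * cond_var n grad pol \<eta> h"
      using contract[OF sc[folded f_def f'_def] sm[folded f_def f'_def] gamma_pos H_pos z eta, of "W h"]
      unfolding \<alpha>_def by simp
    finally show ?thesis .
  qed
  have step: "R (Suc t) \<le> \<alpha> * R t + \<eta>\<^sup>2 * V t" for t
  proof -
    have "R (Suc t) = measure_pmf.expectation (hist_pmf pol t)
        (\<lambda>h. measure_pmf.expectation (sample_pmf (pol h)) (\<lambda>B. (norm (W (B # h) - wstar))\<^sup>2))"
      unfolding R_def by (simp add: integral_bind_finite finH finS)
    also have "\<dots> \<le> measure_pmf.expectation (hist_pmf pol t)
        (\<lambda>h. \<alpha> * (norm (W h - wstar))\<^sup>2 + \<eta>\<^sup>2 * cond_var n grad pol \<eta> h)"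
      by (rule Bochner_Integration.integral_mono) (auto simp: intH inner)
    also have "\<dots> = \<alpha> * R t + \<eta>\<^sup>2 * V t"
      unfolding R_def V_def by (simp add: intH)
    finally show ?thesis .
  qed
  have ind: "R T \<le> \<alpha> ^ T * (norm wstar)\<^sup>2 + \<eta>\<^sup>2 * (\<Sum>t = 1..T. \<alpha> ^ (T - t) * V (t - 1))" for T
  proof (induction T)
    case 0
    show ?case unfolding R_def W_def by simp
  next
    case (Suc T)
    have sum: "(\<Sum>t = 1..Suc T. \<alpha> ^ (Suc T - t) * V (t - 1)) = \<alpha> * (\<Sum>t = 1..T. \<alpha> ^ (T - t) * V (t - 1)) + V T"
    proof -
      have "(\<Sum>t = 1..Suc T. \<alpha> ^ (Suc T - t) * V (t - 1)) = (\<Sum>t = 1..T. \<alpha> ^ (Suc T - t) * V (t - 1)) + V T"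
        by simp
      also have "(\<Sum>t = 1..T. \<alpha> ^ (Suc T - t) * V (t - 1)) = (\<Sum>t = 1..T. \<alpha> * (\<alpha> ^ (T - t) * V (t - 1)))"
        by (intro sum.cong refl) (simp add: Suc_diff_le)
      finally show ?thesis by (simp add: sum_distrib_left)
    qed
    have "R (Suc T) \<le> \<alpha> * R T + \<eta>\<^sup>2 * V T" by (rule step)
    also have "\<dots> \<le> \<alpha> * (\<alpha> ^ T * (norm wstar)\<^sup>2 + \<eta>\<^sup>2 * (\<Sum>t = 1..T. \<alpha> ^ (T - t) * V (t - 1))) + \<eta>\<^sup>2 * V T"
      using Suc a0 by (simp add: mult_left_mono)
    also have "\<dots> = \<alpha> ^ Suc T * (norm wstar)\<^sup>2 + \<eta>\<^sup>2 * (\<Sum>t = 1..Suc T. \<alpha> ^ (Suc T - t) * V (t - 1))"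
      unfolding sum by (simp add: algebra_simps)
    finally show ?case .
  qed
  have fin: "measure_pmf.expectation (hist_pmf pol T) (\<lambda>h. f (W h)) - f wstar
      \<le> \<alpha> ^ T / (2 * \<gamma>) * (norm wstar)\<^sup>2
         + \<eta>\<^sup>2 / (2 * \<gamma>) * (\<Sum>t = 1..T. \<alpha> ^ (T - t) * V (t - 1))" for T
  proof -
    have pt: "f (W h) \<le> f wstar + 1 / (2 * \<gamma>) * (norm (W h - wstar))\<^sup>2" for h
      using sm z unfolding smooth_grad_def f_def f'_def by (metis inner_zero_left add_0_right)
    have pt': "f (W h) - f wstar \<le> 1 / (2 * \<gamma>) * (norm (W h - wstar))\<^sup>2" for h
      using pt[of h] by linarith
    have "measure_pmf.expectation (hist_pmf pol T) (\<lambda>h. f (W h)) - f wstar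
        = measure_pmf.expectation (hist_pmf pol T) (\<lambda>h. f (W h) - f wstar)"
      by (simp add: Bochner_Integration.integral_diff intH measure_pmf.prob_space)
    also have "\<dots> \<le> measure_pmf.expectation (hist_pmf pol T) (\<lambda>h. 1 / (2 * \<gamma>) * (norm (W h - wstar))\<^sup>2)"
      by (rule Bochner_Integration.integral_mono) (rule intH, rule intH, rule pt')
    also have "\<dots> = 1 / (2 * \<gamma>) * R T" unfolding R_def by simp
    also have "\<dots> \<le> 1 / (2 * \<gamma>) * (\<alpha> ^ T * (norm wstar)\<^sup>2 + \<eta>\<^sup>2 * (\<Sum>t = 1..T. \<alpha> ^ (T - t) * V (t - 1)))"
      using ind[of T] gamma_pos by (intro mult_left_mono) auto
    also have "\<dots> = \<alpha> ^ T / (2 * \<gamma>) * (norm wstar)\<^sup>2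
         + \<eta>\<^sup>2 / (2 * \<gamma>) * (\<Sum>t = 1..T. \<alpha> ^ (T - t) * V (t - 1))"
      by (simp add: algebra_simps)
    finally show ?thesis .
  qed
  show ?thesis
    unfolding Let_def \<alpha>_def[symmetric] using ab fin unfolding f_def W_def V_def by simp
qed

end
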